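(* Let $\mathcal M=(G,In,Out,Leak)$ be a linear compartmental model with $In=Out=\{1\}$. Then for every positive integer $j$, $$\sum_{F^*\in\mathcal F_j^{1,1}(\widetilde G^*_1)}\pi_{F^*}=\sum_{F\in\mathcal F_j(\widetilde G_1)}\pi_F.$$
   Context: A linear compartmental model $\mathcal M=(G,In,Out,Leak)$ consists of a finite directed graph $G=(V_G,E_G)$ without multi-edges, compartments $V_G=\{1,\dots,n\}$, and subsets $In,Out,Leak\subseteq V_G$; edge $q\to p$ has label $a_{pq}$. The leak-augmented graph $\widetilde G$ is obtained from $G$ by adding a node $0$ and, for each $p\in Leak$, an edge $p\to0$ labeled $a_{0p}$. $\widetilde G^*_1$ is obtained from $\widetilde G$ by removing all edges outgoing from node $1$. $\widetilde G_1$ is obtained from $\widetilde G^*_1$ by replacing every edge $p\to1$ (label $a_{1p}$) by an edge $p\to0$ with the same label $a_{1p}$ (multi-edges are allowed, i.e. this edge is kept separate from any leak edge $p\to0$), and then deleting node $1$. A spanning incoming forest of a graph is a spanning subgraph whose underlying undirected graph has no cycles and in which each node has at most one outgoing edge. $\mathcal F_j(H)$ is the set of spanning incoming forests of $H$ with exactly $j$ edges, and $\mathcal F_j^{k,\ell}(H)$ those in which some connected component contains both $k$ and $\ell$. $\pi_F$ is the product of the edge labels of $F$ ($1$ if no edges). *)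

theory Defs
  imports Main
begin

text \<open>Edges of (multi)graphs are triples (source, target, label key); the label key
  (p, q) stands for the edge label a_pq.  Keeping the label key in the edge makes parallel
  edges with different labels distinct edges.\<close>

type_synonym medge = "nat \<times> nat \<times> (nat \<times> nat)"

definition src :: "medge \<Rightarrow> nat" where "src e = fst e"
definition tgt :: "medge \<Rightarrow> nat" where "tgt e = fst (snd e)"
definition lab :: "medge \<Rightarrow> nat \<times> nat" where "lab e = snd (snd e)"

text \<open>Linear compartmental model: compartments {1..n}, edge set E of pairs (q,p) meaning
  q \<rightarrow> p, and In, Out, Leak subsets of compartments.\<close>
definition lcm_model :: "nat \<Rightarrow> (nat \<times> nat) set \<Rightarrow> nat set \<Rightarrow> nat set \<Rightarrow> nat set \<Rightarrow> bool" where
  "lcm_model n E In Out Leak \<longleftrightarrow>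
     E \<subseteq> {1..n} \<times> {1..n} \<and> In \<subseteq> {1..n} \<and> Out \<subseteq> {1..n} \<and> Leak \<subseteq> {1..n}"

definition leak_aug_edges :: "(nat \<times> nat) set \<Rightarrow> nat set \<Rightarrow> medge set" where
  "leak_aug_edges E Leak =
     {(q, p, (p, q)) | q p. (q, p) \<in> E} \<union> {(p, 0, (0, p)) | p. p \<in> Leak}"

definition star1_edges :: "(nat \<times> nat) set \<Rightarrow> nat set \<Rightarrow> medge set" where
  "star1_edges E Leak = {e \<in> leak_aug_edges E Leak. src e \<noteq> 1}"

definition G1_edges :: "(nat \<times> nat) set \<Rightarrow> nat set \<Rightarrow> medge set" where
  "G1_edges E Leak =
     {e \<in> star1_edges E Leak. tgt e \<noteq> 1}
     \<union> {(src e, 0, lab e) | e. e \<in> star1_edges E Leak \<and> tgt e = 1}"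

definition has_ucycle :: "medge set \<Rightarrow> bool" where
  "has_ucycle F \<longleftrightarrow> (\<exists>es vs. es \<noteq> [] \<and> set es \<subseteq> F \<and> distinct es \<and>
      length vs = length es + 1 \<and> hd vs = last vs \<and> distinct (tl vs) \<and>
      (\<forall>i < length es. (src (es!i) = vs!i \<and> tgt (es!i) = vs!(Suc i)) \<or>
                       (tgt (es!i) = vs!i \<and> src (es!i) = vs!(Suc i))))"

definition sp_in_forest :: "nat set \<Rightarrow> medge set \<Rightarrow> medge set \<Rightarrow> bool" where
  "sp_in_forest V EH F \<longleftrightarrow> F \<subseteq> EH \<and> \<not> has_ucycle F \<and>
      (\<forall>e1\<in>F. \<forall>e2\<in>F. src e1 = src e2 \<longrightarrow> e1 = e2)"

definition forests :: "nat \<Rightarrow> nat set \<Rightarrow> medge set \<Rightarrow> medge set set" where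
  "forests j V EH = {F. sp_in_forest V EH F \<and> card F = j}"

definition same_comp :: "nat set \<Rightarrow> medge set \<Rightarrow> nat \<Rightarrow> nat \<Rightarrow> bool" where
  "same_comp V F k l \<longleftrightarrow> k \<in> V \<and> l \<in> V \<and>
     (k, l) \<in> ({(src e, tgt e) | e. e \<in> F} \<union> {(tgt e, src e) | e. e \<in> F})\<^sup>*"

definition forests_kl :: "nat \<Rightarrow> nat \<Rightarrow> nat \<Rightarrow> nat set \<Rightarrow> medge set \<Rightarrow> medge set set" where
  "forests_kl j k l V EH = {F \<in> forests j V EH. same_comp V F k l}"

definition piF :: "(nat \<Rightarrow> nat \<Rightarrow> 'a::comm_ring_1) \<Rightarrow> medge set \<Rightarrow> 'a" where
  "piF a F = (\<Prod>e\<in>F. a (fst (lab e)) (snd (lab e)))"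

end

theory Submission
  imports Defs
begin

lemma ucycle_transfer:
  assumes "has_ucycle F"
    and uniq: "\<forall>e1\<in>F. \<forall>e2\<in>F. src e1 = src e2 \<longrightarrow> e1 = e2"
    and tr: "\<And>e. e \<in> F \<Longrightarrow> tgt e \<in> src ` F \<Longrightarrow> e \<in> F'"
  shows "has_ucycle F'"
proof -
  obtain es vs where ne: "es \<noteq> []" and sub: "set es \<subseteq> F" and de: "distinct es"
    and len: "length vs = length es + 1" and hl: "hd vs = last vs" and dv: "distinct (tl vs)"
    and st: "\<forall>i < length es. (src (es!i) = vs!i \<and> tgt (es!i) = vs!(Suc i)) \<or>
                       (tgt (es!i) = vs!i \<and> src (es!i) = vs!(Suc i))"
    using assms(1) unfolding has_ucycle_def by (elim exE conjE) (rule that; assumption)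
  have ends: "src e \<in> set vs \<and> tgt e \<in> set vs" if ein: "e \<in> set es" for e
  proof -
    obtain i where i: "i < length es" "es!i = e" using ein unfolding in_set_conv_nth by blast
    have "vs!i \<in> set vs" "vs!Suc i \<in> set vs" using i len by auto
    then show ?thesis using st i by auto
  qed
  have tlne: "tl vs \<noteq> []" using len ne by (cases vs) auto
  have "set vs = set (tl vs)"
  proof -
    have "vs = hd vs # tl vs" using len by (cases vs) auto
    moreover have "last vs = last (tl vs)" using tlne by (cases vs) auto
    moreover have "last (tl vs) \<in> set (tl vs)" using tlne by simp
    ultimately have "set vs = insert (hd vs) (set (tl vs))" "hd vs \<in> set (tl vs)"
      using hl by (metis list.simps(15), simp)
    then show ?thesis by auto
  qed
  have inj: "inj_on src (set es)" using uniq sub unfolding inj_on_def by blast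
  have c1: "card (src ` set es) = length es" using inj de
    by (simp add: card_image distinct_card)
  have c2: "card (set (tl vs)) = length es" using dv len by (simp add: distinct_card)
  have "src ` set es \<subseteq> set (tl vs)" using ends \<open>set vs = set (tl vs)\<close> by auto
  then have eq: "src ` set es = set (tl vs)" using c1 c2
    by (simp add: card_subset_eq)
  have "set es \<subseteq> F'"
  proof
    fix e assume e: "e \<in> set es"
    have "tgt e \<in> src ` set es" using ends[OF e] eq \<open>set vs = set (tl vs)\<close> by auto
    then have "tgt e \<in> src ` F" using sub by auto
    moreover have "e \<in> F" using e sub by auto
    ultimately show "e \<in> F'" using tr by blast
  qed
  then show ?thesis unfolding has_ucycle_def using ne de len hl dv st
    by (intro exI[of _ es] exI[of _ vs]) blast
qed

definition phi :: "medge \<Rightarrow> medge" where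
  "phi e = (if tgt e = 1 then (src e, 0, lab e) else e)"

lemma phi_src[simp]: "src (phi e) = src e" by (simp add: phi_def src_def)
lemma phi_lab[simp]: "lab (phi e) = lab e" by (simp add: phi_def lab_def)

lemma phi_inj: "inj_on phi (star1_edges E Leak)"
  unfolding inj_on_def phi_def star1_edges_def leak_aug_edges_def src_def tgt_def lab_def
  by auto

lemma G1_phi: "G1_edges E Leak = phi ` star1_edges E Leak"
  unfolding G1_edges_def phi_def by auto

lemma star1_src: "e \<in> star1_edges E Leak \<Longrightarrow> src e \<noteq> 1"
  unfolding star1_edges_def by auto

lemma star1_src0:
  assumes "E \<subseteq> {1..n} \<times> {1..n}" "Leak \<subseteq> {1..n}" "e \<in> star1_edges E Leak"
  shows "src e \<noteq> 0"
  using assms unfolding star1_edges_def leak_aug_edges_def src_def by auto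

lemma forest_equiv:
  assumes E: "E \<subseteq> {1..n} \<times> {1..n}" and L: "Leak \<subseteq> {1..n}"
    and F: "F \<subseteq> star1_edges E Leak"
  shows "sp_in_forest V (star1_edges E Leak) F \<longleftrightarrow> sp_in_forest V' (G1_edges E Leak) (phi ` F)"
proof -
  have injF: "inj_on phi F" using phi_inj F inj_on_subset by blast
  have sub: "phi ` F \<subseteq> G1_edges E Leak" using F G1_phi by auto
  have u: "(\<forall>e1\<in>F. \<forall>e2\<in>F. src e1 = src e2 \<longrightarrow> e1 = e2) \<longleftrightarrow>
        (\<forall>e1\<in>phi ` F. \<forall>e2\<in>phi ` F. src e1 = src e2 \<longrightarrow> e1 = e2)"
    using injF unfolding inj_on_def by auto
  have c1: "has_ucycle (phi ` F)" if "has_ucycle F" "\<forall>e1\<in>F. \<forall>e2\<in>F. src e1 = src e2 \<longrightarrow> e1 = e2"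
  proof (rule ucycle_transfer[OF that])
    fix e assume e: "e \<in> F" "tgt e \<in> src ` F"
    then have "tgt e \<noteq> 1" using F star1_src by fastforce
    then have "phi e = e" by (simp add: phi_def)
    then show "e \<in> phi ` F" using e by (metis imageI)
  qed
  have c2: "has_ucycle F" if "has_ucycle (phi ` F)" "\<forall>e1\<in>phi ` F. \<forall>e2\<in>phi ` F. src e1 = src e2 \<longrightarrow> e1 = e2"
  proof (rule ucycle_transfer[OF that])
    fix e assume e: "e \<in> phi ` F" "tgt e \<in> src ` phi ` F"
    then obtain f where f: "f \<in> F" "e = phi f" by auto
    have "tgt e \<noteq> 0" using e(2) F star1_src0[OF E L] by fastforce
    then have "tgt f \<noteq> 1" using f by (auto simp: phi_def tgt_def)
    then show "e \<in> F" using f by (simp add: phi_def)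
  qed
  show ?thesis unfolding sp_in_forest_def using F sub u c1 c2 by blast
qed

theorem lemma3p11:
  fixes n j :: nat and E :: "(nat \<times> nat) set" and In Out Leak :: "nat set"
    and a :: "nat \<Rightarrow> nat \<Rightarrow> 'a::comm_ring_1"
  assumes "lcm_model n E In Out Leak"
    and "In = {1}" and "Out = {1}"
    and "j > 0"
  shows "(\<Sum>F\<in>forests_kl j 1 1 {0..n} (star1_edges E Leak). piF a F)
       = (\<Sum>F\<in>forests j ({0..n} - {1}) (G1_edges E Leak). piF a F)"
proof -
  have E: "E \<subseteq> {1..n} \<times> {1..n}" and L: "Leak \<subseteq> {1..n}" and n: "1 \<le> n"
    using assms(1,2) unfolding lcm_model_def by auto
  have kl: "forests_kl j 1 1 {0..n} (star1_edges E Leak) = forests j {0..n} (star1_edges E Leak)"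
    using n unfolding forests_kl_def same_comp_def by auto
  have img: "forests j ({0..n} - {1}) (G1_edges E Leak) = (\<lambda>F. phi ` F) ` forests j {0..n} (star1_edges E Leak)"
  proof
    show "(\<lambda>F. phi ` F) ` forests j {0..n} (star1_edges E Leak) \<subseteq> forests j ({0..n} - {1}) (G1_edges E Leak)"
    proof
      fix X assume "X \<in> (\<lambda>F. phi ` F) ` forests j {0..n} (star1_edges E Leak)"
      then obtain F where F: "X = phi ` F" "sp_in_forest {0..n} (star1_edges E Leak) F" "card F = j"
        unfolding forests_def by auto
      have Fs: "F \<subseteq> star1_edges E Leak" using F(2) unfolding sp_in_forest_def by auto
      have "card X = j" using F Fs phi_inj inj_on_subset card_image by metis
      then show "X \<in> forests j ({0..n} - {1}) (G1_edges E Leak)"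
        using forest_equiv[OF E L Fs] F unfolding forests_def by auto
    qed
  next
    show "forests j ({0..n} - {1}) (G1_edges E Leak) \<subseteq> (\<lambda>F. phi ` F) ` forests j {0..n} (star1_edges E Leak)"
    proof
      fix X assume X: "X \<in> forests j ({0..n} - {1}) (G1_edges E Leak)"
      then have Xs: "X \<subseteq> G1_edges E Leak" unfolding forests_def sp_in_forest_def by auto
      define F where "F = {e \<in> star1_edges E Leak. phi e \<in> X}"
      have Fs: "F \<subseteq> star1_edges E Leak" unfolding F_def by auto
      have XF: "X = phi ` F" using Xs G1_phi unfolding F_def by auto
      have "card F = j" using X XF Fs phi_inj inj_on_subset card_image unfolding forests_def
        by (metis (mono_tags, lifting) mem_Collect_eq)
      then have "F \<in> forests j {0..n} (star1_edges E Leak)"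
        using forest_equiv[OF E L Fs, of "{0..n}" "{0..n} - {1}"] X XF unfolding forests_def by auto
      then show "X \<in> (\<lambda>F. phi ` F) ` forests j {0..n} (star1_edges E Leak)" using XF by auto
    qed
  qed
  have inj: "inj_on (\<lambda>F. phi ` F) (forests j {0..n} (star1_edges E Leak))"
  proof (rule inj_onI)
    fix F1 F2 assume a1: "F1 \<in> forests j {0..n} (star1_edges E Leak)"
      and a2: "F2 \<in> forests j {0..n} (star1_edges E Leak)" and eq: "phi ` F1 = phi ` F2"
    have "F1 \<subseteq> star1_edges E Leak" "F2 \<subseteq> star1_edges E Leak"
      using a1 a2 unfolding forests_def sp_in_forest_def by auto
    then show "F1 = F2" using eq phi_inj inj_on_image_eq_iff by metis
  qed
  have pi: "piF a (phi ` F) = piF a F" if "F \<in> forests j {0..n} (star1_edges E Leak)" for F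
  proof -
    have "F \<subseteq> star1_edges E Leak" using that unfolding forests_def sp_in_forest_def by auto
    then have "inj_on phi F" using phi_inj inj_on_subset by blast
    then show ?thesis unfolding piF_def by (simp add: prod.reindex)
  qed
  have "sum (piF a) ((\<lambda>F. phi ` F) ` forests j {0..n} (star1_edges E Leak))
      = sum (\<lambda>F. piF a (phi ` F)) (forests j {0..n} (star1_edges E Leak))"
    using sum.reindex[OF inj] by (simp add: comp_def)
  also have "\<dots> = sum (piF a) (forests j {0..n} (star1_edges E Leak))"
    using pi by (rule sum.cong[OF refl])
  finally show ?thesis unfolding kl img by simp
qed

end
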